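(* Let $\mathbf P=(P,\leq,{}',0,1)$ be an orthogonal lub-complete poset. Then the following conditions are equivalent: (i) $\mathbf P$ is an orthomodular poset. (ii) $\mathbf P$ satisfies $x\leq y$ if and only if $x\rightarrow_K y=1$ for all $x,y\in P$. (iii) $\mathbf P$ satisfies $x\leq y$ if and only if $x\rightarrow_N y=1$ for all $x,y\in P$.
   Context: $(P,\leq,{}',0,1)$ is a bounded poset with an antitone involution ${}'$; orthogonal means $x\leq y'$ implies $x\vee y$ exists; lub-complete means for every lower bound $x$ of a finite subset $M$ there is a maximal lower bound of $M$ above $x$; orthomodular means orthogonal and $x\leq y$ implies $x\vee(y\wedge x')=y$. For $A\subseteq P$, $L(A)$, $U(A)$ are the lower and upper cones, $\mathrm{Max}\,A$, $\mathrm{Min}\,A$ the sets of maximal and minimal elements; joins/meets with sets are elementwise. Kalmbach implication: $x\rightarrow_K y:=\mathrm{Max}\,L(x',y)\vee \mathrm{Max}\,L(x',y')\vee (x\wedge \mathrm{Min}\,U(x',y))$; non-tolens implication: $x\rightarrow_N y:=y'\rightarrow_K x'$. "$=1$" means equal to $\{1\}$. *)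

theory Defs
  imports Main
begin

text \<open>The bounded poset (P, \<le>, ', 0, 1) is modelled as a type of class bounded_order
  (0 = bot, 1 = top) together with an operation cmp (the map x \<mapsto> x').\<close>

definition antitone_involution :: "('a::order \<Rightarrow> 'a) \<Rightarrow> bool" where
  "antitone_involution cmp \<longleftrightarrow> (\<forall>x y. x \<le> y \<longrightarrow> cmp y \<le> cmp x) \<and> (\<forall>x. cmp (cmp x) = x)"

definition is_join :: "'a::order \<Rightarrow> 'a \<Rightarrow> 'a \<Rightarrow> bool" where
  "is_join x y s \<longleftrightarrow> x \<le> s \<and> y \<le> s \<and> (\<forall>t. x \<le> t \<and> y \<le> t \<longrightarrow> s \<le> t)"

definition is_meet :: "'a::order \<Rightarrow> 'a \<Rightarrow> 'a \<Rightarrow> bool" where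
  "is_meet x y m \<longleftrightarrow> m \<le> x \<and> m \<le> y \<and> (\<forall>t. t \<le> x \<and> t \<le> y \<longrightarrow> t \<le> m)"

definition lcone :: "'a::order set \<Rightarrow> 'a set" where
  "lcone A = {x. \<forall>a\<in>A. x \<le> a}"

definition ucone :: "'a::order set \<Rightarrow> 'a set" where
  "ucone A = {x. \<forall>a\<in>A. a \<le> x}"

definition maxs :: "'a::order set \<Rightarrow> 'a set" where
  "maxs A = {x\<in>A. \<forall>y\<in>A. x \<le> y \<longrightarrow> y = x}"

definition mins :: "'a::order set \<Rightarrow> 'a set" where
  "mins A = {x\<in>A. \<forall>y\<in>A. y \<le> x \<longrightarrow> y = x}"

definition set_join :: "'a::order set \<Rightarrow> 'a set \<Rightarrow> 'a set" where
  "set_join A B = {s. \<exists>a\<in>A. \<exists>b\<in>B. is_join a b s}"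

definition set_meet :: "'a::order set \<Rightarrow> 'a set \<Rightarrow> 'a set" where
  "set_meet A B = {m. \<exists>a\<in>A. \<exists>b\<in>B. is_meet a b m}"

definition orthogonal :: "('a::order \<Rightarrow> 'a) \<Rightarrow> bool" where
  "orthogonal cmp \<longleftrightarrow> (\<forall>x y. x \<le> cmp y \<longrightarrow> (\<exists>s. is_join x y s))"

definition lub_complete :: "'a::order itself \<Rightarrow> bool" where
  "lub_complete _ \<longleftrightarrow>
     (\<forall>M :: 'a set. finite M \<longrightarrow> (\<forall>x\<in>lcone M. \<exists>m\<in>maxs (lcone M). x \<le> m))"

definition orthomodular :: "('a::order \<Rightarrow> 'a) \<Rightarrow> bool" where
  "orthomodular cmp \<longleftrightarrow> orthogonal cmp \<and>
     (\<forall>x y. x \<le> y \<longrightarrow> (\<exists>m. is_meet y (cmp x) m \<and> is_join x m y))"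

definition impK :: "('a::order \<Rightarrow> 'a) \<Rightarrow> 'a \<Rightarrow> 'a \<Rightarrow> 'a set" where
  "impK cmp x y =
     set_join (set_join (maxs (lcone {cmp x, y})) (maxs (lcone {cmp x, cmp y})))
              (set_meet {x} (mins (ucone {cmp x, y})))"

definition impN :: "('a::order \<Rightarrow> 'a) \<Rightarrow> 'a \<Rightarrow> 'a \<Rightarrow> 'a set" where
  "impN cmp x y = impK cmp (cmp y) (cmp x)"

end

theory Submission
  imports Defs
begin

lemma join_unique: "is_join a b s \<Longrightarrow> is_join a b t \<Longrightarrow> s = t"
  unfolding is_join_def by (meson order.antisym)

lemma meet_unique: "is_meet a b s \<Longrightarrow> is_meet a b t \<Longrightarrow> s = t"
  unfolding is_meet_def by (meson order.antisym)

lemma join_sym: "is_join a b s \<Longrightarrow> is_join b a s"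
  unfolding is_join_def by blast

lemma meet_sym: "is_meet a b s \<Longrightarrow> is_meet b a s"
  unfolding is_meet_def by blast

lemma join_bot: "is_join x (bot::'a::order_bot) x"
  unfolding is_join_def by auto

lemma join_le: "x \<le> y \<Longrightarrow> is_join x y y"
  unfolding is_join_def by auto

lemma meet_le: "x \<le> y \<Longrightarrow> is_meet x y x"
  unfolding is_meet_def by auto

lemma maxs_meet: "is_meet a b m \<Longrightarrow> maxs (lcone {a,b}) = {m}"
  unfolding is_meet_def maxs_def lcone_def by (auto intro: order.antisym)

lemma mins_join: "is_join a b m \<Longrightarrow> mins (ucone {a,b}) = {m}"
  unfolding is_join_def mins_def ucone_def by (auto intro: order.antisym)

lemma set_join_single: "is_join a b s \<Longrightarrow> set_join {a} {b} = {s}"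
  unfolding set_join_def using join_unique by auto

lemma set_meet_single: "is_meet a b s \<Longrightarrow> set_meet {a} {b} = {s}"
  unfolding set_meet_def using meet_unique by auto

context
  fixes cmp :: "'a::{order_bot,order_top} \<Rightarrow> 'a"
  assumes AI: "antitone_involution cmp"
begin

lemma inv[simp]: "cmp (cmp x) = x"
  using AI unfolding antitone_involution_def by blast

lemma anti: "x \<le> y \<Longrightarrow> cmp y \<le> cmp x"
  using AI unfolding antitone_involution_def by blast

lemma anti_iff[simp]: "cmp y \<le> cmp x \<longleftrightarrow> x \<le> y"
  by (metis anti inv)

lemma swap: "x \<le> cmp y \<longleftrightarrow> y \<le> cmp x"
  by (metis anti_iff inv)

lemma cmp_bot[simp]: "cmp bot = top"
  by (metis anti bot_least inv top.extremum_uniqueI)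

lemma cmp_top[simp]: "cmp top = bot"
  by (metis cmp_bot inv)

lemma cmp_eq_top: "cmp e = top \<Longrightarrow> e = bot"
  by (metis cmp_top inv)

lemma meet_from_join: "is_join (cmp a) (cmp b) s \<Longrightarrow> is_meet a b (cmp s)"
  unfolding is_join_def is_meet_def by (metis inv anti_iff)

lemma join_from_meet: "is_meet (cmp a) (cmp b) s \<Longrightarrow> is_join a b (cmp s)"
  unfolding is_join_def is_meet_def by (metis inv anti_iff)


lemma om_L:
  assumes OM: "orthomodular cmp" and "c \<le> z"
    and U: "\<And>u. c \<le> u \<Longrightarrow> cmp z \<le> u \<Longrightarrow> u = top"
  shows "c = z"
proof -
  obtain m where m1: "is_meet z (cmp c) m" and m2: "is_join c m z"
    using OM assms(2) unfolding orthomodular_def by blast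
  have "m \<le> z" "m \<le> cmp c" using m1 unfolding is_meet_def by auto
  hence "cmp z \<le> cmp m" "c \<le> cmp m" by (auto simp: swap)
  hence "cmp m = top" using U by blast
  hence "m = bot" by (rule cmp_eq_top)
  thus ?thesis using m2 join_bot join_unique by metis
qed

lemma om_compl: "orthomodular cmp \<Longrightarrow> is_join x (cmp x) top"
proof -
  assume OM: "orthomodular cmp"
  obtain m where m1: "is_meet top (cmp x) m" and m2: "is_join x m top"
    using OM top_greatest[of x] unfolding orthomodular_def by blast
  have "m = cmp x" using m1 meet_sym[OF meet_le[of "cmp x" top]] meet_unique by simp
  thus ?thesis using m2 by simp
qed

lemma lemA:
  assumes OM: "orthomodular cmp" and xy: "x \<le> y"
  shows "impK cmp x y = {top}"
proof -
  have OG: "orthogonal cmp" using OM unfolding orthomodular_def by blast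
  obtain j where j: "is_join x (cmp y) j" using OG xy unfolding orthogonal_def by force
  have mm: "is_meet (cmp x) y (cmp j)" using meet_from_join[of "cmp x" y j] j by simp
  have y'x': "cmp y \<le> cmp x" using xy by simp
  have e1: "maxs (lcone {cmp x, y}) = {cmp j}" using maxs_meet[OF mm] .
  have e2: "maxs (lcone {cmp x, cmp y}) = {cmp y}"
    using maxs_meet[OF meet_sym[OF meet_le[OF y'x']]] by simp
  have jt: "is_join (cmp x) y top"
    using om_compl[OF OM, of x] xy unfolding is_join_def by (meson order_trans top_greatest)
  have e3: "mins (ucone {cmp x, y}) = {top}" using mins_join[OF jt] .
  have e4: "set_meet {x} {top} = {x}" using set_meet_single[OF meet_le[of x top]] by simp
  obtain m0 where m01: "is_meet (cmp x) y m0" and m02: "is_join (cmp y) m0 (cmp x)"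
    using OM y'x' unfolding orthomodular_def by fastforce
  have "m0 = cmp j" using m01 mm meet_unique by blast
  hence e5: "set_join {cmp j} {cmp y} = {cmp x}" using m02 join_sym set_join_single by blast
  have e6: "set_join {cmp x} {x} = {top}" using om_compl[OF OM, of x] join_sym set_join_single by blast
  show ?thesis unfolding impK_def e1 e2 e3 e4 e5 e6 ..
qed

lemma lemB:
  assumes OM: "orthomodular cmp" and T: "top \<in> impK cmp x y"
  shows "x \<le> y"
proof -
  obtain s c where s: "s \<in> set_join (maxs (lcone {cmp x, y})) (maxs (lcone {cmp x, cmp y}))"
    and c: "c \<in> set_meet {x} (mins (ucone {cmp x, y}))" and sc: "is_join s c top"
    using T unfolding impK_def set_join_def by blast
  obtain a b where a: "a \<in> maxs (lcone {cmp x, y})" and b: "b \<in> maxs (lcone {cmp x, cmp y})"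
    and ab: "is_join a b s" using s unfolding set_join_def by blast
  obtain d where d: "d \<in> mins (ucone {cmp x, y})" and xd: "is_meet x d c"
    using c unfolding set_meet_def by blast
  have a1: "a \<le> cmp x" "a \<le> y" using a unfolding maxs_def lcone_def by auto
  have b1: "b \<le> cmp x" "b \<le> cmp y" using b unfolding maxs_def lcone_def by auto
  have sx: "s \<le> cmp x" using ab a1 b1 unfolding is_join_def by blast
  have cx: "c \<le> x" using xd unfolding is_meet_def by blast
  have "c = x"
  proof (rule om_L[OF OM cx])
    fix u assume "c \<le> u" "cmp x \<le> u"
    hence "s \<le> u" using sx by (meson order_trans)
    thus "u = top" using sc \<open>c \<le> u\<close> unfolding is_join_def by (simp add: top_unique)
  qed
  have "s = cmp x"
  proof (rule om_L[OF OM sx])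
    fix u assume "s \<le> u" "cmp (cmp x) \<le> u"
    hence "c \<le> u" using \<open>c = x\<close> by simp
    thus "u = top" using sc \<open>s \<le> u\<close> unfolding is_join_def by (simp add: top_unique)
  qed
  have dx: "x \<le> d" "cmp x \<le> d" using xd \<open>c = x\<close> d unfolding is_meet_def mins_def ucone_def by auto
  hence "d = top" using om_compl[OF OM, of x] unfolding is_join_def by (simp add: top_unique)
  hence UT: "\<And>u. cmp x \<le> u \<Longrightarrow> y \<le> u \<Longrightarrow> u = top"
    using d unfolding mins_def ucone_def by auto
  obtain e where e1: "is_meet (cmp y) (cmp b) e" and e2: "is_join b e (cmp y)"
    using OM b1 unfolding orthomodular_def by blast
  have "e \<le> cmp y" "e \<le> cmp b" using e1 unfolding is_meet_def by auto
  hence "a \<le> cmp e" "b \<le> cmp e" "y \<le> cmp e" using a1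
    by (auto simp: swap) (meson order_trans swap)
  hence "cmp x \<le> cmp e" using ab \<open>s = cmp x\<close> unfolding is_join_def by blast
  hence "cmp e = top" using UT \<open>y \<le> cmp e\<close> by blast
  hence "e = bot" by (rule cmp_eq_top)
  hence "cmp y = b" using e2 join_bot join_unique by metis
  thus ?thesis using b1 by (metis anti_iff inv)
qed

lemma lemC:
  assumes OG: "orthogonal cmp"
    and H1: "\<And>x y. x \<le> y \<Longrightarrow> impK cmp x y = {top}"
    and H2: "\<And>x y. impK cmp x y = {top} \<Longrightarrow> x \<le> y"
  shows "orthomodular cmp"
proof -
  have compl: "is_join (cmp x) x top" for x
  proof -
    obtain j where j: "is_join (cmp x) x j" using OG unfolding orthogonal_def by force
    have "maxs (lcone {cmp x, top}) = {cmp x}" using maxs_meet[OF meet_le[of "cmp x" top]] by simp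
    moreover have "maxs (lcone {cmp x, cmp top}) = {bot}"
      using maxs_meet[OF meet_sym[OF meet_le[of bot "cmp x"]]] by simp
    moreover have "mins (ucone {cmp x, top}) = {top}" using mins_join[OF join_le[of "cmp x" top]] by simp
    moreover have "set_meet {x} {top} = {x}" using set_meet_single[OF meet_le[of x top]] by simp
    moreover have "set_join {cmp x} {bot} = {cmp x}" using set_join_single join_bot by metis
    moreover have "set_join {cmp x} {x} = {j}" using set_join_single j by metis
    ultimately have "impK cmp x top = {j}" unfolding impK_def by simp
    with H1[of x top] have "j = top" by simp
    thus ?thesis using j by simp
  qed
  have mb: "is_meet x (cmp x) bot" for x
    using meet_from_join[of x "cmp x" top] compl[of x] by simp
  show ?thesis unfolding orthomodular_def
  proof (intro conjI allI impI OG)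
    fix x y :: 'a assume xy: "x \<le> y"
    obtain j where j: "is_join (cmp y) x j" using OG xy unfolding orthogonal_def by force
    define m where "m = cmp j"
    have mm: "is_meet y (cmp x) m" using meet_from_join[of y "cmp x" j] j m_def by simp
    have m1: "m \<le> y" "m \<le> cmp x" using mm unfolding is_meet_def by auto
    obtain z where z: "is_join x m z" using OG m1 unfolding orthogonal_def by (force simp: swap)
    have zy: "z \<le> y" using z xy m1 unfolding is_join_def by blast
    have xz: "x \<le> z" "m \<le> z" using z unfolding is_join_def by auto
    have q1: "is_meet (cmp y) z bot"
      unfolding is_meet_def
    proof (intro conjI allI impI)
      fix t assume "t \<le> cmp y \<and> t \<le> z"
      hence "t \<le> cmp z" "t \<le> z" using zy by (auto intro: order_trans)
      thus "t \<le> bot" using mb[of z] unfolding is_meet_def by blast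
    qed auto
    have q2: "is_meet (cmp y) (cmp z) (cmp y)" using meet_le[of "cmp y" "cmp z"] zy by simp
    have q3: "is_join (cmp y) z top"
      unfolding is_join_def
    proof (intro conjI allI impI)
      fix u assume u: "cmp y \<le> u \<and> z \<le> u"
      hence "cmp u \<le> y" "cmp u \<le> cmp z" by (metis anti_iff inv)+
      hence "cmp u \<le> cmp x" "cmp u \<le> cmp m" using xz by (auto intro: order_trans)
      hence "cmp u \<le> m" using mm \<open>cmp u \<le> y\<close> unfolding is_meet_def by blast
      hence "cmp u \<le> bot" using mb[of m] \<open>cmp u \<le> cmp m\<close> unfolding is_meet_def by blast
      hence "cmp u = bot" by (simp add: bot_unique)
      hence "u = top" by (metis inv cmp_bot)
      thus "top \<le> u" by simp
    qed auto
    have "impK cmp y z = {top}"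
      unfolding impK_def maxs_meet[OF q1] maxs_meet[OF q2] mins_join[OF q3]
      using set_meet_single[OF meet_le[of y top]] set_join_single[OF join_sym[OF join_bot[of "cmp y"]]]
        set_join_single[OF compl[of y]] by simp
    hence "y \<le> z" by (rule H2)
    hence "z = y" using zy by simp
    thus "\<exists>m. is_meet y (cmp x) m \<and> is_join x m y" using mm z by blast
  qed
qed

lemma lemD:
  "(\<forall>x y. x \<le> y \<longleftrightarrow> impN cmp x y = {top}) \<longleftrightarrow> (\<forall>x y. x \<le> y \<longleftrightarrow> impK cmp x y = {top})"
  unfolding impN_def by (metis anti_iff inv)

end

theorem theorem6:
  fixes cmp :: "'a::{order_bot,order_top} \<Rightarrow> 'a"
  assumes "antitone_involution cmp"
    and "orthogonal cmp"
    and "lub_complete TYPE('a)"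
  shows "(orthomodular cmp \<longleftrightarrow> (\<forall>x y. x \<le> y \<longleftrightarrow> impK cmp x y = {top}))
       \<and> (orthomodular cmp \<longleftrightarrow> (\<forall>x y. x \<le> y \<longleftrightarrow> impN cmp x y = {top}))"
proof -
  have 1: "orthomodular cmp \<longleftrightarrow> (\<forall>x y. x \<le> y \<longleftrightarrow> impK cmp x y = {top})"
  proof
    assume OM: "orthomodular cmp"
    show "\<forall>x y. x \<le> y \<longleftrightarrow> impK cmp x y = {top}"
    proof (intro allI iffI)
      fix x y :: 'a
      assume "x \<le> y" thus "impK cmp x y = {top}" by (rule lemA[OF assms(1) OM])
    next
      fix x y :: 'a
      assume "impK cmp x y = {top}"
      hence "top \<in> impK cmp x y" by simp
      thus "x \<le> y" by (rule lemB[OF assms(1) OM])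
    qed
  next
    assume H: "\<forall>x y. x \<le> y \<longleftrightarrow> impK cmp x y = {top}"
    show "orthomodular cmp"
    proof (rule lemC[OF assms(1,2)])
      fix x y :: 'a
      show "x \<le> y \<Longrightarrow> impK cmp x y = {top}" using H by blast
      show "impK cmp x y = {top} \<Longrightarrow> x \<le> y" using H by blast
    qed
  qed
  have 2: "(\<forall>x y. x \<le> y \<longleftrightarrow> impN cmp x y = {top}) \<longleftrightarrow> (\<forall>x y. x \<le> y \<longleftrightarrow> impK cmp x y = {top})"
    by (rule lemD[OF assms(1)])
  show ?thesis unfolding 2 using 1 by (intro conjI)
qed

end
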